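(* Let $x = (x_1, \ldots, x_n)$ and $y = (y_1, \ldots, y_n)$ be vectors in $\mathbb{R}^n$ with $\sum_i x_i = \sum_i y_i = 0$. Then $$\sum_{1 \leq i < j \leq n} (x_i - x_j)^2 (y_i - y_j)^2 \geq \|x\|^2 \|y\|^2,$$ where $\|\cdot\|$ is the Euclidean norm. *)

theory Defs
  imports "HOL-Analysis.Analysis"
begin

end

theory Submission
  imports Defs
begin

lemma half_sum:
  fixes f :: "nat \<Rightarrow> nat \<Rightarrow> real"
  assumes "\<And>i j. f i j = f j i" "\<And>i. f i i = 0"
  shows "2 * (\<Sum>j\<in>{1..n}. \<Sum>i\<in>{1..<j}. f i j) = (\<Sum>j\<in>{1..n}. \<Sum>i\<in>{1..n}. f i j)"
proof (induction n)
  case 0 then show ?case by simp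
next
  case (Suc n)
  have e: "{1..<Suc n} = {1..n}" by auto
  have "(\<Sum>j\<in>{1..Suc n}. \<Sum>i\<in>{1..Suc n}. f i j)
     = (\<Sum>j\<in>{1..n}. \<Sum>i\<in>{1..n}. f i j) + (\<Sum>j\<in>{1..n}. f (Suc n) j) + (\<Sum>i\<in>{1..n}. f i (Suc n)) + f (Suc n) (Suc n)"
    by (simp add: sum.distrib)
  also have "\<dots> = (\<Sum>j\<in>{1..n}. \<Sum>i\<in>{1..n}. f i j) + 2 * (\<Sum>i\<in>{1..n}. f i (Suc n))"
    using assms by simp
  finally show ?case using Suc e by (simp add: algebra_simps)
qed

lemma expand:
  fixes x y :: "nat \<Rightarrow> real"
  assumes "(\<Sum>i\<in>I. x i) = 0" and "(\<Sum>i\<in>I. y i) = 0"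
  shows "(\<Sum>j\<in>I. \<Sum>i\<in>I. (x i - x j)^2 * (y i - y j)^2)
    = 2 * of_nat (card I) * (\<Sum>i\<in>I. x i^2 * y i^2) + 2 * (\<Sum>i\<in>I. (x i)^2) * (\<Sum>i\<in>I. (y i)^2) + 4 * (\<Sum>i\<in>I. x i * y i)^2"
proof -
  have "\<And>i j. (x i - x j)^2 * (y i - y j)^2 = x i^2*y i^2 + x j^2*y j^2 + x i^2*y j^2 + x j^2*y i^2 + 4*(x i*y i)*(x j*y j)
     - 2*(x i^2*y i)*y j - 2*(x j^2*y j)*y i - 2*(x i*y i^2)*x j - 2*(x j*y j^2)*x i"
    by (simp add: power2_eq_square algebra_simps)
  then have "(\<Sum>j\<in>I. \<Sum>i\<in>I. (x i - x j)^2 * (y i - y j)^2) =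
     (\<Sum>j\<in>I. \<Sum>i\<in>I. x i^2*y i^2 + x j^2*y j^2 + x i^2*y j^2 + x j^2*y i^2 + 4*(x i*y i)*(x j*y j)
     - 2*(x i^2*y i)*y j - 2*(x j^2*y j)*y i - 2*(x i*y i^2)*x j - 2*(x j*y j^2)*x i)" by simp
  also have "\<dots> = (\<Sum>j\<in>I. \<Sum>i\<in>I. x i^2*y i^2) + (\<Sum>j\<in>I. \<Sum>i\<in>I. x j^2*y j^2) + (\<Sum>j\<in>I. \<Sum>i\<in>I. x i^2*y j^2)
     + (\<Sum>j\<in>I. \<Sum>i\<in>I. x j^2*y i^2) + (\<Sum>j\<in>I. \<Sum>i\<in>I. 4*(x i*y i)*(x j*y j))
     - (\<Sum>j\<in>I. \<Sum>i\<in>I. 2*(x i^2*y i)*y j) - (\<Sum>j\<in>I. \<Sum>i\<in>I. 2*(x j^2*y j)*y i)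
     - (\<Sum>j\<in>I. \<Sum>i\<in>I. 2*(x i*y i^2)*x j) - (\<Sum>j\<in>I. \<Sum>i\<in>I. 2*(x j*y j^2)*x i)"
    by (simp only: sum.distrib sum_subtractf)
  also have "\<dots> = 2 * of_nat (card I) * (\<Sum>i\<in>I. x i^2 * y i^2) + 2 * (\<Sum>i\<in>I. (x i)^2) * (\<Sum>i\<in>I. (y i)^2) + 4 * (\<Sum>i\<in>I. x i * y i)^2"
  proof -
    have a: "(\<Sum>j\<in>I. \<Sum>i\<in>I. 2*(x i^2*y i)*y j) = 0" "(\<Sum>j\<in>I. \<Sum>i\<in>I. 2*(x j^2*y j)*y i) = 0"
      "(\<Sum>j\<in>I. \<Sum>i\<in>I. 2*(x i*y i^2)*x j) = 0" "(\<Sum>j\<in>I. \<Sum>i\<in>I. 2*(x j*y j^2)*x i) = 0"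
      using assms by (simp_all add: sum_distrib_left[symmetric] sum_distrib_right[symmetric])
    have b: "(\<Sum>j\<in>I. \<Sum>i\<in>I. x i^2*y j^2) = (\<Sum>i\<in>I. (x i)^2) * (\<Sum>i\<in>I. (y i)^2)"
      "(\<Sum>j\<in>I. \<Sum>i\<in>I. x j^2*y i^2) = (\<Sum>i\<in>I. (x i)^2) * (\<Sum>i\<in>I. (y i)^2)"
      "(\<Sum>j\<in>I. \<Sum>i\<in>I. 4*(x i*y i)*(x j*y j)) = 4 * (\<Sum>i\<in>I. x i * y i)^2"
      apply (simp_all add: sum_distrib_left[symmetric] sum_distrib_right[symmetric])
      apply (simp add: sum_distrib_left sum_distrib_right power2_eq_square)
      done
    have c: "(\<Sum>j\<in>I. \<Sum>i\<in>I. x i^2*y i^2) = of_nat (card I) * (\<Sum>i\<in>I. x i^2 * y i^2)"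
      "(\<Sum>j\<in>I. \<Sum>i\<in>I. x j^2*y j^2) = of_nat (card I) * (\<Sum>i\<in>I. x i^2 * y i^2)"
      by (simp_all add: sum_distrib_left)
    show ?thesis unfolding a b c by simp
  qed
  finally show ?thesis .
qed
theorem lemma3:
  fixes n :: nat and x y :: "nat \<Rightarrow> real"
  assumes "(\<Sum>i\<in>{1..n}. x i) = 0" and "(\<Sum>i\<in>{1..n}. y i) = 0"
  shows "(\<Sum>j\<in>{1..n}. \<Sum>i\<in>{1..<j}. (x i - x j)^2 * (y i - y j)^2)
           \<ge> (\<Sum>i\<in>{1..n}. (x i)^2) * (\<Sum>i\<in>{1..n}. (y i)^2)"
proof -
  let ?f = "\<lambda>i j. (x i - x j)^2 * (y i - y j)^2"
  have h: "2 * (\<Sum>j\<in>{1..n}. \<Sum>i\<in>{1..<j}. ?f i j) = (\<Sum>j\<in>{1..n}. \<Sum>i\<in>{1..n}. ?f i j)"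
    by (rule half_sum) (simp_all add: power2_commute)
  have e: "(\<Sum>j\<in>{1..n}. \<Sum>i\<in>{1..n}. ?f i j) = 2 * of_nat (card {1..n}) * (\<Sum>i\<in>{1..n}. x i^2 * y i^2)
     + 2 * (\<Sum>i\<in>{1..n}. (x i)^2) * (\<Sum>i\<in>{1..n}. (y i)^2) + 4 * (\<Sum>i\<in>{1..n}. x i * y i)^2"
    by (rule expand[OF assms])
  have "0 \<le> (\<Sum>i\<in>{1..n}. x i^2 * y i^2)" by (intro sum_nonneg) simp
  then have "0 \<le> 2 * of_nat (card {1..n}) * (\<Sum>i\<in>{1..n}. x i^2 * y i^2)" by simp
  moreover have "0 \<le> 4 * (\<Sum>i\<in>{1..n}. x i * y i)^2" by simp
  ultimately show ?thesis using h e by linarith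
qed

end
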